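(* Let $\lambda\in(0,1)$ and let $G=([n],E)$ be any undirected graph (information graph). Then \[ \frac{\alpha(G) - (\alpha(G)-1)\lambda}{\alpha(G)} \;\ge\; \gamma_\lambda(G) \;\ge\; \frac{\theta(G) - (\theta(G)-1)\lambda}{\theta(G)+\lambda}, \] where $\alpha(G)$ is the independence number of $G$ and $\theta(G)$ is its clique cover number (the least number of cliques partitioning the vertex set).
   Context: For a finite base set $S$ and $f:2^S\to\mathbb{R}_{\ge0}$, write $f(A\mid B)=f(A\cup B)-f(B)$. $f$ is normalized if $f(\emptyset)=0$, monotone if $f(\{e\}\mid A)\ge0$ for all $e,A$, submodular if $f(\{e\}\mid A)\ge f(\{e\}\mid B)$ for $A\subseteq B\subseteq S$, $e\in S\setminus B$. Such $f$ has total curvature $\lambda\in(0,1)$ if $f(\{e\}\mid A)\ge(1-\lambda)f(\{e\})$ for all $e\in S$ and $A\subseteq S\setminus\{e\}$; $\mathcal{F}_\lambda$ is the set of normalized, monotone, submodular functions with total curvature $\lambda$. There are $n$ agents $[n]$ with decision sets $X_i\subseteq S$ forming a partition of $S$; action profiles $x\in X=X_1\times\cdots\times X_n$ are valued by $f(x)=f(\{x_1,\dots,x_n\})$, and $x_M=\{x_i:i\in M\}$. Let $x^{\mathrm{opt}}\in\arg\max_{x\in X}f(x)$. Given an undirected graph $G=([n],E)$, let $\mathcal{N}_i=\{j<i : (j,i)\in E\}$. The generalized greedy algorithm produces $x^{\mathrm{sol}}$ with $x^{\mathrm{sol}}_i\in\arg\max_{x_i\in X_i} f(x_i\mid x^{\mathrm{sol}}_{\mathcal{N}_i})$,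 taking $x^{\mathrm{sol}}$ to be the worst among all possible greedy outcomes. Define $\gamma(f,X,G)=f(x^{\mathrm{sol}})/f(x^{\mathrm{opt}})$ and $\gamma_\lambda(G)=\inf_{f\in\mathcal{F}_\lambda,X}\gamma(f,X,G)$. *)

theory Defs
  imports Main "HOL-Library.Disjoint_Sets" Complex_Main
begin

definition undirected_graph :: "nat \<Rightarrow> (nat \<times> nat) set \<Rightarrow> bool" where
  "undirected_graph n E \<longleftrightarrow> E \<subseteq> {1..n} \<times> {1..n} \<and> sym E \<and> irrefl E"

definition independent_set :: "(nat \<times> nat) set \<Rightarrow> nat set \<Rightarrow> bool" where
  "independent_set E I \<longleftrightarrow> (\<forall>u\<in>I. \<forall>v\<in>I. (u, v) \<notin> E)"

definition clique :: "(nat \<times> nat) set \<Rightarrow> nat set \<Rightarrow> bool" where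
  "clique E C \<longleftrightarrow> (\<forall>u\<in>C. \<forall>v\<in>C. u \<noteq> v \<longrightarrow> (u, v) \<in> E)"

definition independence_number :: "nat \<Rightarrow> (nat \<times> nat) set \<Rightarrow> nat" where
  "independence_number n E = Max {card I | I. I \<subseteq> {1..n} \<and> independent_set E I}"

definition clique_cover_number :: "nat \<Rightarrow> (nat \<times> nat) set \<Rightarrow> nat" where
  "clique_cover_number n E =
     (LEAST k. \<exists>P. partition_on {1..n} P \<and> (\<forall>C\<in>P. clique E C) \<and> card P = k)"

definition marg :: "(nat set \<Rightarrow> real) \<Rightarrow> nat set \<Rightarrow> nat set \<Rightarrow> real" where
  "marg f A B = f (A \<union> B) - f B"

text \<open>f : 2^S \<rightarrow> R_{\<ge>0} is normalized, monotone, submodular, with total curvature lambda.\<close>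
definition in_F_lambda :: "real \<Rightarrow> nat set \<Rightarrow> (nat set \<Rightarrow> real) \<Rightarrow> bool" where
  "in_F_lambda lam S f \<longleftrightarrow>
     (\<forall>A. A \<subseteq> S \<longrightarrow> f A \<ge> 0) \<and>
     f {} = 0 \<and>
     (\<forall>e\<in>S. \<forall>A. A \<subseteq> S \<longrightarrow> marg f {e} A \<ge> 0) \<and>
     (\<forall>A B e. A \<subseteq> B \<and> B \<subseteq> S \<and> e \<in> S - B \<longrightarrow> marg f {e} A \<ge> marg f {e} B) \<and>
     (\<forall>e\<in>S. \<forall>A. A \<subseteq> S - {e} \<longrightarrow> marg f {e} A \<ge> (1 - lam) * f {e})"

definition decision_sets :: "nat \<Rightarrow> nat set \<Rightarrow> (nat \<Rightarrow> nat set) \<Rightarrow> bool" where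
  "decision_sets n S X \<longleftrightarrow>
     (\<forall>i\<in>{1..n}. X i \<noteq> {}) \<and>
     (\<forall>i\<in>{1..n}. \<forall>j\<in>{1..n}. i \<noteq> j \<longrightarrow> X i \<inter> X j = {}) \<and>
     (\<Union>i\<in>{1..n}. X i) = S"

definition action_profile :: "nat \<Rightarrow> (nat \<Rightarrow> nat set) \<Rightarrow> (nat \<Rightarrow> nat) \<Rightarrow> bool" where
  "action_profile n X x \<longleftrightarrow> (\<forall>i\<in>{1..n}. x i \<in> X i)"

definition acts :: "(nat \<Rightarrow> nat) \<Rightarrow> nat set \<Rightarrow> nat set" where
  "acts x M = x ` M"

definition nbrs :: "(nat \<times> nat) set \<Rightarrow> nat \<Rightarrow> nat set" where
  "nbrs E i = {j. j < i \<and> (j, i) \<in> E}"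

definition opt_value :: "nat \<Rightarrow> (nat \<Rightarrow> nat set) \<Rightarrow> (nat set \<Rightarrow> real) \<Rightarrow> real" where
  "opt_value n X f = Max {f (acts x {1..n}) | x. action_profile n X x}"

definition greedy_outcome ::
  "nat \<Rightarrow> (nat \<times> nat) set \<Rightarrow> (nat \<Rightarrow> nat set) \<Rightarrow> (nat set \<Rightarrow> real) \<Rightarrow> (nat \<Rightarrow> nat) \<Rightarrow> bool" where
  "greedy_outcome n E X f x \<longleftrightarrow> action_profile n X x \<and>
     (\<forall>i\<in>{1..n}. \<forall>y\<in>X i. marg f {x i} (acts x (nbrs E i)) \<ge> marg f {y} (acts x (nbrs E i)))"

definition gamma ::
  "nat \<Rightarrow> (nat \<times> nat) set \<Rightarrow> (nat \<Rightarrow> nat set) \<Rightarrow> (nat set \<Rightarrow> real) \<Rightarrow> real" where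
  "gamma n E X f = Inf {f (acts x {1..n}) / opt_value n X f | x. greedy_outcome n E X f x}"

text \<open>gamma_lambda(G): infimum over finite base sets S (w.l.o.g. subsets of nat),
  decision-set partitions X, and f in F_lambda with positive optimum.\<close>
definition gamma_lambda :: "real \<Rightarrow> nat \<Rightarrow> (nat \<times> nat) set \<Rightarrow> real" where
  "gamma_lambda lam n E = Inf {gamma n E X f | S X f.
      finite S \<and> decision_sets n S X \<and> in_F_lambda lam S f \<and> opt_value n X f > 0}"

end

theory Submission
  imports Defs
begin

lemma telescope:
  fixes f :: "nat set \<Rightarrow> real" and y :: "nat \<Rightarrow> nat"
  assumes "finite T"
  shows "(\<Sum>i\<in>T. marg f {y i} (B0 \<union> y ` {j\<in>T. j < i})) = f (B0 \<union> y ` T) - f B0"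
  using assms
proof (induction T rule: finite_linorder_max_induct)
  case empty
  then show ?case by simp
next
  case (insert m T)
  have mT: "m \<notin> T" using insert.hyps(2) by auto
  have e1: "{j\<in>insert m T. j < m} = T" using insert.hyps(2) by auto
  have e2: "\<And>i. i \<in> T \<Longrightarrow> {j\<in>insert m T. j < i} = {j\<in>T. j < i}" using insert.hyps(2) by auto
  have "(\<Sum>i\<in>insert m T. marg f {y i} (B0 \<union> y ` {j\<in>insert m T. j < i}))
      = marg f {y m} (B0 \<union> y ` T) + (\<Sum>i\<in>T. marg f {y i} (B0 \<union> y ` {j\<in>insert m T. j < i}))"
    by (simp only: sum.insert[OF insert.hyps(1) mT] e1)
  also have "(\<Sum>i\<in>T. marg f {y i} (B0 \<union> y ` {j\<in>insert m T. j < i}))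
      = (\<Sum>i\<in>T. marg f {y i} (B0 \<union> y ` {j\<in>T. j < i}))"
    by (rule sum.cong) (simp_all only: e2)
  also have "\<dots> = f (B0 \<union> y ` T) - f B0" by (rule insert.IH)
  finally show ?case
    by (simp add: marg_def insert_commute)
qed

lemma greedy_exists_aux:
  assumes fin: "finite S" and ds: "decision_sets n S X"
  shows "\<exists>x. (\<forall>i\<in>{1..n}. x i \<in> X i) \<and>
     (\<forall>i\<in>{1..n}. i \<le> m \<longrightarrow> (\<forall>y\<in>X i. marg f {x i} (acts x (nbrs E i)) \<ge> marg f {y} (acts x (nbrs E i))))"
proof (induction m)
  case 0
  have "\<forall>i\<in>{1..n}. X i \<noteq> {}" using ds by (simp add: decision_sets_def)
  then have "\<forall>i\<in>{1..n}. (SOME y. y \<in> X i) \<in> X i" by (metis some_in_eq)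
  then show ?case by (intro exI[of _ "\<lambda>i. SOME y. y \<in> X i"]) auto
next
  case (Suc m)
  then obtain x where x1: "\<forall>i\<in>{1..n}. x i \<in> X i"
    and x2: "\<forall>i\<in>{1..n}. i \<le> m \<longrightarrow> (\<forall>y\<in>X i. marg f {x i} (acts x (nbrs E i)) \<ge> marg f {y} (acts x (nbrs E i)))"
    by blast
  show ?case
  proof (cases "Suc m \<in> {1..n}")
    case False
    then show ?thesis using x1 x2
      by (intro exI[of _ x]) (auto simp: le_Suc_eq)
  next
    case True
    define g where "g y = marg f {y} (acts x (nbrs E (Suc m)))" for y
    have ne: "X (Suc m) \<noteq> {}" using ds True by (simp add: decision_sets_def)
    have finX: "finite (X (Suc m))"
      using ds True fin unfolding decision_sets_def by (meson UN_upper finite_subset)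
    have "Max (g ` X (Suc m)) \<in> g ` X (Suc m)" using ne finX by simp
    then obtain y0 where y0: "y0 \<in> X (Suc m)" "g y0 = Max (g ` X (Suc m))" by auto
    have y0max: "\<forall>y\<in>X (Suc m). g y \<le> g y0" using y0 finX by simp
    define x' where "x' = x(Suc m := y0)"
    have acts_eq: "acts x' (nbrs E i) = acts x (nbrs E i)" if "i \<le> Suc m" for i
    proof -
      have "\<forall>j\<in>nbrs E i. x' j = x j" using that by (auto simp: x'_def nbrs_def)
      then show ?thesis by (simp add: acts_def)
    qed
    have "\<forall>i\<in>{1..n}. x' i \<in> X i" using x1 y0 by (simp add: x'_def)
    moreover have "\<forall>i\<in>{1..n}. i \<le> Suc m \<longrightarrow> (\<forall>y\<in>X i. marg f {x' i} (acts x' (nbrs E i)) \<ge> marg f {y} (acts x' (nbrs E i)))"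
    proof (intro ballI impI)
      fix i y assume i: "i \<in> {1..n}" "i \<le> Suc m" and y: "y \<in> X i"
      show "marg f {x' i} (acts x' (nbrs E i)) \<ge> marg f {y} (acts x' (nbrs E i))"
      proof (cases "i = Suc m")
        case True
        then show ?thesis using y y0max acts_eq[of i] by (simp add: x'_def g_def)
      next
        case False
        then have "i \<le> m" using i by simp
        then show ?thesis using x2 i y acts_eq[of i] False by (simp add: x'_def)
      qed
    qed
    ultimately show ?thesis by blast
  qed
qed

lemma greedy_exists:
  assumes fin: "finite S" and ds: "decision_sets n S X"
  shows "\<exists>x. greedy_outcome n E X f x"
  using greedy_exists_aux[OF fin ds, of n f E]
  unfolding greedy_outcome_def action_profile_def by auto

lemma opt_finite:
  assumes fin: "finite S" and ds: "decision_sets n S X"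
  shows "finite {f (acts x {1..n}) | x. action_profile n X x}"
proof -
  have "{f (acts x {1..n}) | x. action_profile n X x} \<subseteq> f ` Pow S"
    using ds unfolding decision_sets_def action_profile_def acts_def by blast
  then show ?thesis using fin by (meson finite_Pow_iff finite_imageI finite_subset)
qed

lemma opt_ge:
  assumes fin: "finite S" and ds: "decision_sets n S X" and "action_profile n X x"
  shows "f (acts x {1..n}) \<le> opt_value n X f"
  unfolding opt_value_def using assms opt_finite[OF fin ds, of f]
  by (intro Max_ge) auto

lemma opt_attained:
  assumes fin: "finite S" and ds: "decision_sets n S X"
  shows "\<exists>x. action_profile n X x \<and> f (acts x {1..n}) = opt_value n X f"
proof -
  obtain x0 where "greedy_outcome n E X f x0" using greedy_exists[OF fin ds] by blast
  then have "action_profile n X x0" by (simp add: greedy_outcome_def)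
  then have ne: "{f (acts x {1..n}) | x. action_profile n X x} \<noteq> {}" by blast
  show ?thesis using Max_in[OF opt_finite[OF fin ds, of f] ne] unfolding opt_value_def by auto
qed

lemma ratio_lb:
  assumes lam: "0 < lam" "lam < 1" and fin: "finite S" and ds: "decision_sets n S X"
    and F: "in_F_lambda lam S f" and optpos: "opt_value n X f > 0"
    and g: "greedy_outcome n E X f x" and ug: "undirected_graph n E"
    and P: "partition_on {1..n} P" "\<forall>C\<in>P. clique E C"
  shows "(real (card P) - (real (card P) - 1) * lam) / (real (card P) + lam)
          \<le> f (acts x {1..n}) / opt_value n X f"
proof -
  define V where "V = {1..n::nat}"
  define a where "a i = marg f {x i} (x ` nbrs E i)" for i
  define xs where "xs = x ` V"
  define k where "k = real (card P)"
  define A where "A = (\<Sum>i\<in>V. a i)"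
  have finV: "finite V" by (simp add: V_def)
  have nonneg: "\<And>B. B \<subseteq> S \<Longrightarrow> f B \<ge> 0" and f0: "f {} = 0"
    and mono: "\<And>e B. e \<in> S \<Longrightarrow> B \<subseteq> S \<Longrightarrow> marg f {e} B \<ge> 0"
    and sub: "\<And>B1 B2 e. B1 \<subseteq> B2 \<Longrightarrow> B2 \<subseteq> S \<Longrightarrow> e \<in> S \<Longrightarrow> e \<notin> B2 \<Longrightarrow> marg f {e} B1 \<ge> marg f {e} B2"
    using F unfolding in_F_lambda_def by auto
  have curv: "\<And>e B. e \<in> S \<Longrightarrow> B \<subseteq> S \<Longrightarrow> e \<notin> B \<Longrightarrow> marg f {e} B \<ge> (1 - lam) * f {e}"
  proof -
    fix e B assume "e \<in> S" "B \<subseteq> S" "e \<notin> B"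
    then have "B \<subseteq> S - {e}" by blast
    then show "marg f {e} B \<ge> (1 - lam) * f {e}" using F \<open>e \<in> S\<close> unfolding in_F_lambda_def by blast
  qed
  have XS: "\<And>i. i \<in> V \<Longrightarrow> X i \<subseteq> S" using ds by (auto simp: decision_sets_def V_def)
  have disj: "\<And>i j u. i \<in> V \<Longrightarrow> j \<in> V \<Longrightarrow> i \<noteq> j \<Longrightarrow> u \<in> X i \<Longrightarrow> u \<notin> X j"
  proof -
    fix i j u assume h: "i \<in> V" "j \<in> V" "i \<noteq> j" "u \<in> X i"
    have "X i \<inter> X j = {}" using ds h(1-3) unfolding decision_sets_def V_def by blast
    then show "u \<notin> X j" using h(4) by blast
  qed
  have xX: "\<And>i. i \<in> V \<Longrightarrow> x i \<in> X i" using g by (auto simp: greedy_outcome_def action_profile_def V_def)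
  have xS: "\<And>i. i \<in> V \<Longrightarrow> x i \<in> S" using xX XS by blast
  have greedy: "\<And>i y. i \<in> V \<Longrightarrow> y \<in> X i \<Longrightarrow> marg f {y} (x ` nbrs E i) \<le> a i"
    using g by (auto simp: greedy_outcome_def a_def acts_def V_def)
  obtain xo where xo: "action_profile n X xo" "f (acts xo {1..n}) = opt_value n X f"
    using opt_attained[OF fin ds] by blast
  have xoX: "\<And>i. i \<in> V \<Longrightarrow> xo i \<in> X i" using xo by (auto simp: action_profile_def V_def)
  have xoS: "\<And>i. i \<in> V \<Longrightarrow> xo i \<in> S" using xoX XS by blast
  have PV: "\<Union>P = V" and Pdisj: "disjoint P" using P by (auto simp: partition_on_def V_def)
  have finP: "finite P" using PV finV by (metis finite_UnionD)
  have CV: "\<And>C. C \<in> P \<Longrightarrow> C \<subseteq> V" using PV by blast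
  have nbrsV: "\<And>i. i \<in> V \<Longrightarrow> x ` nbrs E i \<subseteq> S \<and> x i \<notin> x ` nbrs E i"
  proof -
    fix i assume i: "i \<in> V"
    show "x ` nbrs E i \<subseteq> S \<and> x i \<notin> x ` nbrs E i"
    proof -
      have "nbrs E i \<subseteq> V - {i}" using ug by (auto simp: undirected_graph_def nbrs_def V_def)
      then have "x ` nbrs E i \<subseteq> S" using xS by blast
      moreover have "x i \<notin> x ` nbrs E i"
      proof
        assume "x i \<in> x ` nbrs E i"
        then obtain j where "j \<in> nbrs E i" "x i = x j" by blast
        then have "j \<in> V" "j \<noteq> i" using \<open>nbrs E i \<subseteq> V - {i}\<close> by auto
        then show False using disj[of i j "x i"] xX[of i] xX[of j] i \<open>x i = x j\<close> by auto
      qed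
      ultimately show ?thesis by blast
    qed
  qed

  have a_le: "\<And>i. i \<in> V \<Longrightarrow> a i \<le> f {x i}"
  proof -
    fix i assume i: "i \<in> V"
    have "marg f {x i} (x ` nbrs E i) \<le> marg f {x i} {}"
      using sub[of "{}" "x ` nbrs E i" "x i"] nbrsV[OF i] xS[OF i] by auto
    then show "a i \<le> f {x i}" by (simp add: a_def marg_def f0)
  qed
  have a_nn: "\<And>i. i \<in> V \<Longrightarrow> a i \<ge> 0"
  proof -
    fix i assume "i \<in> V" then show "a i \<ge> 0" unfolding a_def using mono[of "x i" "x ` nbrs E i"] nbrsV xS by blast
  qed
  have dx: "\<And>i j. i \<in> V \<Longrightarrow> j \<in> V \<Longrightarrow> i \<noteq> j \<Longrightarrow> x i \<noteq> x j \<and> x i \<noteq> xo j \<and> xo i \<noteq> xo j"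
  proof -
    fix i j assume h: "i \<in> V" "j \<in> V" "i \<noteq> j"
    have "x i \<notin> X j" "xo i \<notin> X j" using disj[OF h] xX[OF h(1)] xoX[OF h(1)] by auto
    then show "x i \<noteq> x j \<and> x i \<noteq> xo j \<and> xo i \<noteq> xo j" using xX[OF h(2)] xoX[OF h(2)] by auto
  qed
  have xsS: "xs \<subseteq> S" using xS by (auto simp: xs_def)
  have xoVS: "xo ` V \<subseteq> S" using xoS by auto
  have stepA: "(\<Sum>i\<in>C. a i) \<le> f (x ` C)" if C: "C \<in> P" for C
  proof -
    have finC: "finite C" using CV[OF C] finV finite_subset by blast
    have "(\<Sum>i\<in>C. a i) \<le> (\<Sum>i\<in>C. marg f {x i} ({} \<union> x ` {j\<in>C. j < i}))"
    proof (rule sum_mono)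
      fix i assume i: "i \<in> C"
      have iV: "i \<in> V" using i CV[OF C] by blast
      have "{j\<in>C. j < i} \<subseteq> nbrs E i"
        using P(2) C i unfolding clique_def nbrs_def by auto
      then have "{} \<union> x ` {j\<in>C. j < i} \<subseteq> x ` nbrs E i" by blast
      then show "a i \<le> marg f {x i} ({} \<union> x ` {j\<in>C. j < i})"
        unfolding a_def using sub[of "{} \<union> x ` {j\<in>C. j < i}" "x ` nbrs E i" "x i"] nbrsV[OF iV] xS[OF iV] by blast
    qed
    also have "\<dots> = f ({} \<union> x ` C) - f {}" by (rule telescope[OF finC])
    finally show ?thesis by (simp add: f0)
  qed
  have stepB: "f xs \<ge> f (x ` C) + (1 - lam) * (\<Sum>j\<in>V - C. a j)" if C: "C \<in> P" for C
  proof -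
    have "(1 - lam) * (\<Sum>j\<in>V - C. a j) = (\<Sum>j\<in>V - C. (1 - lam) * a j)"
      by (simp add: sum_distrib_left)
    also have "\<dots> \<le> (\<Sum>j\<in>V - C. marg f {x j} (x ` C \<union> x ` {i\<in>V - C. i < j}))"
    proof (rule sum_mono)
      fix j assume j: "j \<in> V - C"
      have jV: "j \<in> V" using j by blast
      have sub1: "x ` C \<union> x ` {i\<in>V - C. i < j} \<subseteq> S" using xS CV[OF C] by blast
      have nin: "x j \<notin> x ` C \<union> x ` {i\<in>V - C. i < j}"
      proof
        assume "x j \<in> x ` C \<union> x ` {i\<in>V - C. i < j}"
        then obtain i where "i \<in> V" "i \<noteq> j" "x j = x i" using j CV[OF C] by auto
        then show False using dx[OF jV, of i] by auto
      qed
      have "(1 - lam) * a j \<le> (1 - lam) * f {x j}"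
        using a_le[OF jV] lam by (intro mult_left_mono) auto
      also have "\<dots> \<le> marg f {x j} (x ` C \<union> x ` {i\<in>V - C. i < j})"
        using curv[OF xS[OF jV] sub1 nin] .
      finally show "(1 - lam) * a j \<le> marg f {x j} (x ` C \<union> x ` {i\<in>V - C. i < j})" .
    qed
    also have "\<dots> = f (x ` C \<union> x ` (V - C)) - f (x ` C)"
      by (rule telescope) (simp add: finV)
    also have "x ` C \<union> x ` (V - C) = xs" using CV[OF C] by (auto simp: xs_def)
    finally show ?thesis by simp
  qed
  have stepC: "f xs \<ge> lam * (\<Sum>i\<in>C. a i) + (1 - lam) * A" if C: "C \<in> P" for C
  proof -
    have "A = (\<Sum>i\<in>C. a i) + (\<Sum>i\<in>V - C. a i)"
      unfolding A_def using CV[OF C] finV by (metis sum.subset_diff add.commute)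
    then show ?thesis using stepA[OF C] stepB[OF C] by (simp add: algebra_simps)
  qed
  have sumP: "(\<Sum>C\<in>P. (\<Sum>i\<in>C. a i)) = A"
  proof -
    have "A = sum a (\<Union>P)" by (simp add: A_def PV)
    also have "\<dots> = (sum \<circ> sum) a P"
    proof (rule sum.Union_disjoint_sets)
      show "\<forall>C\<in>P. finite C" using CV finV by (meson finite_subset)
      show "disjoint P" by (rule Pdisj)
    qed
    finally show ?thesis by simp
  qed
  have kA: "k * f xs \<ge> lam * A + k * (1 - lam) * A"
  proof -
    have "(\<Sum>C\<in>P. lam * (\<Sum>i\<in>C. a i) + (1 - lam) * A) \<le> (\<Sum>C\<in>P. f xs)"
      by (rule sum_mono) (use stepC in auto)
    then show ?thesis
      by (simp add: sum.distrib sum_distrib_left[symmetric] sumP k_def)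
  qed
  define D where "D = {i\<in>V. x i \<noteq> xo i}"
  have finD: "finite D" using finV by (simp add: D_def)
  have DV: "D \<subseteq> V" by (auto simp: D_def)
  have seteq: "xo ` V \<union> x ` D = xs \<union> xo ` D"
  proof
    show "xo ` V \<union> x ` D \<subseteq> xs \<union> xo ` D"
    proof
      fix u assume "u \<in> xo ` V \<union> x ` D"
      then consider (a) i where "i \<in> V" "u = xo i" | (b) i where "i \<in> D" "u = x i" by blast
      then show "u \<in> xs \<union> xo ` D"
      proof cases
        case (a i) show ?thesis
        proof (cases "i \<in> D")
          case True then show ?thesis using a by auto
        next
          case False then have "u = x i" using a by (simp add: D_def)
          then show ?thesis using a by (simp add: xs_def)
        qed
      next
        case (b i) then show ?thesis using DV by (auto simp: xs_def)
      qed
    qed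
  next
    show "xs \<union> xo ` D \<subseteq> xo ` V \<union> x ` D"
    proof
      fix u assume "u \<in> xs \<union> xo ` D"
      then consider (a) i where "i \<in> V" "u = x i" | (b) i where "i \<in> D" "u = xo i" unfolding xs_def by blast
      then show "u \<in> xo ` V \<union> x ` D"
      proof cases
        case (a i) show ?thesis
        proof (cases "i \<in> D")
          case True then show ?thesis using a by auto
        next
          case False then have "u = xo i" using a by (simp add: D_def)
          then show ?thesis using a by simp
        qed
      next
        case (b i) then show ?thesis using DV by auto
      qed
    qed
  qed
  have lowD: "f (xo ` V) + (1 - lam) * (\<Sum>i\<in>D. a i) \<le> f (xo ` V \<union> x ` D)"
  proof -
    have "(1 - lam) * (\<Sum>i\<in>D. a i) = (\<Sum>i\<in>D. (1 - lam) * a i)"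
      by (simp add: sum_distrib_left)
    also have "\<dots> \<le> (\<Sum>i\<in>D. marg f {x i} (xo ` V \<union> x ` {j\<in>D. j < i}))"
    proof (rule sum_mono)
      fix i assume i: "i \<in> D"
      have iV: "i \<in> V" using i DV by blast
      have sub1: "xo ` V \<union> x ` {j\<in>D. j < i} \<subseteq> S" using xS xoS DV by blast
      have nin: "x i \<notin> xo ` V \<union> x ` {j\<in>D. j < i}"
      proof
        assume "x i \<in> xo ` V \<union> x ` {j\<in>D. j < i}"
        then consider (a) j where "j \<in> V" "x i = xo j" | (b) j where "j \<in> V" "j \<noteq> i" "x i = x j"
          using DV by blast
        then show False
        proof cases
          case (a j) then show False using dx[OF iV, of j] i by (cases "i = j") (auto simp: D_def)
        next
          case (b j) then show False using dx[OF iV, of j] by auto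
        qed
      qed
      have "(1 - lam) * a i \<le> (1 - lam) * f {x i}"
        using a_le[OF iV] lam by (intro mult_left_mono) auto
      also have "\<dots> \<le> marg f {x i} (xo ` V \<union> x ` {j\<in>D. j < i})"
        using curv[OF xS[OF iV] sub1 nin] .
      finally show "(1 - lam) * a i \<le> marg f {x i} (xo ` V \<union> x ` {j\<in>D. j < i})" .
    qed
    also have "\<dots> = f (xo ` V \<union> x ` D) - f (xo ` V)" by (rule telescope[OF finD])
    finally show ?thesis by simp
  qed
  have upD: "f (xs \<union> xo ` D) \<le> f xs + (\<Sum>i\<in>D. a i)"
  proof -
    have "f (xs \<union> xo ` D) - f xs = (\<Sum>i\<in>D. marg f {xo i} (xs \<union> xo ` {j\<in>D. j < i}))"
      by (rule telescope[OF finD, symmetric])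
    also have "\<dots> \<le> (\<Sum>i\<in>D. a i)"
    proof (rule sum_mono)
      fix i assume i: "i \<in> D"
      have iV: "i \<in> V" using i DV by blast
      have sub1: "xs \<union> xo ` {j\<in>D. j < i} \<subseteq> S" using xsS xoS DV by blast
      have nin: "xo i \<notin> xs \<union> xo ` {j\<in>D. j < i}"
      proof
        assume "xo i \<in> xs \<union> xo ` {j\<in>D. j < i}"
        then consider (a) j where "j \<in> V" "xo i = x j" | (b) j where "j \<in> V" "j \<noteq> i" "xo i = xo j"
          using DV unfolding xs_def by blast
        then show False
        proof cases
          case (a j) then show False using dx[OF iV, of j] i dx[of j i] by (cases "i = j") (auto simp: D_def)
        next
          case (b j) then show False using dx[OF iV, of j] by auto
        qed
      qed
      have nsub: "x ` nbrs E i \<subseteq> xs \<union> xo ` {j\<in>D. j < i}"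
        using ug iV unfolding xs_def nbrs_def undirected_graph_def V_def by auto
      have "marg f {xo i} (xs \<union> xo ` {j\<in>D. j < i}) \<le> marg f {xo i} (x ` nbrs E i)"
        using sub[OF nsub sub1 xoS[OF iV] nin] .
      also have "\<dots> \<le> a i" using greedy[OF iV xoX[OF iV]] .
      finally show "marg f {xo i} (xs \<union> xo ` {j\<in>D. j < i}) \<le> a i" .
    qed
    finally show ?thesis by simp
  qed
  have DA: "(\<Sum>i\<in>D. a i) \<le> A"
    unfolding A_def using DV finV a_nn by (intro sum_mono2) auto
  have optv: "opt_value n X f = f (xo ` V)" using xo(2) by (simp add: acts_def V_def)
  have opt_le: "opt_value n X f \<le> f xs + lam * A"
  proof -
    have "opt_value n X f + (1 - lam) * (\<Sum>i\<in>D. a i) \<le> f xs + (\<Sum>i\<in>D. a i)"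
      using lowD upD seteq optv by simp
    then have "opt_value n X f \<le> f xs + lam * (\<Sum>i\<in>D. a i)" by (simp add: algebra_simps)
    also have "\<dots> \<le> f xs + lam * A" using DA lam by (simp add: mult_left_mono)
    finally show ?thesis .
  qed
  define c where "c = k - (k - 1) * lam"
  have k0: "k \<ge> 0" by (simp add: k_def)
  have cpos: "c > 0"
  proof -
    have "c = k * (1 - lam) + lam" by (simp add: c_def algebra_simps)
    moreover have "k * (1 - lam) \<ge> 0" using k0 lam by simp
    ultimately show ?thesis using lam by linarith
  qed
  have cA: "c * A \<le> k * f xs" using kA by (simp add: c_def algebra_simps)
  have "c * opt_value n X f \<le> c * (f xs + lam * A)"
    using opt_le cpos by (simp add: mult_left_mono)
  also have "\<dots> = c * f xs + lam * (c * A)" by (simp add: algebra_simps)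
  also have "\<dots> \<le> c * f xs + lam * (k * f xs)" using cA lam by (simp add: mult_left_mono)
  also have "\<dots> = (k + lam) * f xs" by (simp add: c_def algebra_simps)
  finally have main: "c * opt_value n X f \<le> (k + lam) * f xs" .
  have klpos: "k + lam > 0" using k0 lam by simp
  have "c / (k + lam) \<le> f xs / opt_value n X f"
    using main klpos optpos by (simp add: divide_le_eq le_divide_eq field_simps)
  then show ?thesis by (simp add: c_def k_def xs_def acts_def V_def)
qed

definition hh :: "real \<Rightarrow> nat \<Rightarrow> real" where
  "hh lam k = (if k = 0 then 0 else real k - (real k - 1) * lam)"

definition ASet :: "nat set \<Rightarrow> nat set" where "ASet I = (\<lambda>i. 3 * i) ` I"
definition BSet :: "nat set \<Rightarrow> nat set" where "BSet I = (\<lambda>i. 3 * i + 1) ` I"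

definition fI :: "real \<Rightarrow> nat set \<Rightarrow> nat set \<Rightarrow> real" where
  "fI lam I A = hh lam (card (A \<inter> ASet I)) + real (card (A \<inter> BSet I))"

definition XI :: "nat set \<Rightarrow> nat \<Rightarrow> nat set" where
  "XI I i = (if i \<in> I then {3 * i, 3 * i + 1} else {3 * i + 2})"

lemma hh_step: "hh lam (Suc k) - hh lam k = (if k = 0 then 1 else 1 - lam)"
  by (simp add: hh_def algebra_simps)

lemma marg_fI:
  assumes "finite I"
  shows "marg (fI lam I) {e} A =
    (if e \<in> A then 0 else if e \<in> ASet I then (if card (A \<inter> ASet I) = 0 then 1 else 1 - lam)
     else if e \<in> BSet I then 1 else 0)"
proof -
  have fA: "finite (ASet I)" "finite (BSet I)" using assms by (simp_all add: ASet_def BSet_def)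
  have AB: "ASet I \<inter> BSet I = {}" unfolding ASet_def BSet_def by auto presburger
  show ?thesis
  proof (cases "e \<in> A")
    case True
    then have "{e} \<union> A = A" by blast
    then show ?thesis using True by (simp add: marg_def)
  next
    case False
    show ?thesis
    proof (cases "e \<in> ASet I")
      case True
      have e1: "(insert e A) \<inter> ASet I = insert e (A \<inter> ASet I)" using True by blast
      have e2: "(insert e A) \<inter> BSet I = A \<inter> BSet I" using True AB by blast
      have c1: "card (insert e (A \<inter> ASet I)) = Suc (card (A \<inter> ASet I))"
        using False fA by simp
      show ?thesis using True False
        by (simp add: marg_def fI_def e1 e2 c1 hh_step[symmetric])
    next
      case nA: False
      show ?thesis
      proof (cases "e \<in> BSet I")
        case True
        have e1: "(insert e A) \<inter> BSet I = insert e (A \<inter> BSet I)" using True by blast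
        have e2: "(insert e A) \<inter> ASet I = A \<inter> ASet I" using nA by blast
        have c1: "card (insert e (A \<inter> BSet I)) = Suc (card (A \<inter> BSet I))"
          using False fA by simp
        show ?thesis using True False nA
          by (simp add: marg_def fI_def e1 e2 c1)
      next
        case nB: False
        have e1: "(insert e A) \<inter> BSet I = A \<inter> BSet I" using nB by blast
        have e2: "(insert e A) \<inter> ASet I = A \<inter> ASet I" using nA by blast
        show ?thesis using nB False nA
          by (simp add: marg_def fI_def e1 e2)
      qed
    qed
  qed
qed

lemma fI_in_F:
  assumes "finite I" "0 < lam" "lam < 1"
  shows "in_F_lambda lam S (fI lam I)"
proof -
  have hh_nn: "hh lam k \<ge> 0" for k
  proof (cases "k = 0")
    case False
    have "real k - (real k - 1) * lam \<ge> real k - (real k - 1)"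
      using False assms by (intro diff_left_mono) (simp add: mult_left_le)
    then show ?thesis using False by (simp add: hh_def)
  qed (simp add: hh_def)
  have mf: "\<And>e A. marg (fI lam I) {e} A = (if e \<in> A then 0 else if e \<in> ASet I then (if card (A \<inter> ASet I) = 0 then 1 else 1 - lam)
     else if e \<in> BSet I then 1 else 0)" using marg_fI[OF assms(1)] .
  have single: "\<And>e. fI lam I {e} = (if e \<in> ASet I then 1 else if e \<in> BSet I then 1 else 0)"
  proof -
    fix e
    have "fI lam I {} = 0" by (simp add: fI_def hh_def)
    then have "fI lam I {e} = marg (fI lam I) {e} {}" by (simp add: marg_def)
    then show "fI lam I {e} = (if e \<in> ASet I then 1 else if e \<in> BSet I then 1 else 0)" by (simp add: mf)
  qed
  have finA: "finite (ASet I)" using assms by (simp add: ASet_def)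
  show ?thesis unfolding in_F_lambda_def
  proof (intro conjI allI impI ballI)
    fix A show "0 \<le> fI lam I A" using hh_nn by (simp add: fI_def)
  next
    show "fI lam I {} = 0" by (simp add: fI_def hh_def)
  next
    fix e A show "0 \<le> marg (fI lam I) {e} A" using assms by (simp add: mf)
  next
    fix A B e assume h: "A \<subseteq> B \<and> B \<subseteq> S \<and> e \<in> S - B"
    have "card (A \<inter> ASet I) \<le> card (B \<inter> ASet I)"
      using h finA by (intro card_mono) auto
    then show "marg (fI lam I) {e} B \<le> marg (fI lam I) {e} A"
      using h assms by (auto simp: mf)
  next
    fix e A assume h: "A \<subseteq> S - {e}"
    then show "(1 - lam) * fI lam I {e} \<le> marg (fI lam I) {e} A"
      using assms by (auto simp: mf single)
  qed
qed

lemma m0: "(3 * (i::nat)) mod 3 = 0" by simp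
lemma m1: "(3 * (i::nat) + 1) mod 3 = 1" by presburger
lemma m2: "(3 * (i::nat) + 2) mod 3 = 2" by presburger
lemma d0: "(3 * (i::nat)) div 3 = i" by presburger
lemma d1: "(3 * (i::nat) + 1) div 3 = i" by presburger
lemma d2: "(3 * (i::nat) + 2) div 3 = i" by presburger
lemma XI_div: "u \<in> XI I i \<Longrightarrow> u div 3 = i"
  by (auto simp: XI_def split: if_splits)

lemma ub_instance:
  assumes lam: "0 < lam" "lam < 1" and ug: "undirected_graph n E"
    and IV: "I \<subseteq> {1..n}" and ind: "independent_set E I" and Ine: "I \<noteq> {}"
  defines "S \<equiv> (\<Union>i\<in>{1..n}. XI I i)"
  shows "finite S \<and> decision_sets n S (XI I) \<and> in_F_lambda lam S (fI lam I)
      \<and> opt_value n (XI I) (fI lam I) > 0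
      \<and> gamma n E (XI I) (fI lam I) \<le> (real (card I) - (real (card I) - 1) * lam) / real (card I)"
proof -
  define V where "V = {1..n::nat}"
  have finI: "finite I" using IV finite_subset by blast
  have cI: "card I \<ge> 1" using finI Ine by (simp add: Suc_le_eq card_gt_0_iff)
  have finS: "finite S" by (simp add: S_def XI_def)
  have ds: "decision_sets n S (XI I)"
    unfolding decision_sets_def S_def
  proof (intro conjI ballI impI)
    fix i assume "i \<in> {1..n}" show "XI I i \<noteq> {}" by (simp add: XI_def)
  next
    fix i j assume "i \<in> {1..n}" "j \<in> {1..n}" "i \<noteq> j"
    then show "XI I i \<inter> XI I j = {}"
      using XI_div[of _ I i] XI_div[of _ I j] by blast
  qed simp
  have F: "in_F_lambda lam S (fI lam I)" by (rule fI_in_F[OF finI lam])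
  define xg where "xg i = (if i \<in> I then 3 * i else 3 * i + 2)" for i
  define xb where "xb i = (if i \<in> I then 3 * i + 1 else 3 * i + 2)" for i
  have notA2: "3 * j + 2 \<notin> ASet I" for j
  proof
    assume "3 * j + 2 \<in> ASet I" then obtain k where "3 * j + 2 = 3 * k" by (auto simp: ASet_def)
    then have "(3 * j + 2) mod 3 = (3 * k) mod 3" by simp
    then show False by (simp only: m0 m2; simp)
  qed
  have notB2: "3 * j + 2 \<notin> BSet I" for j
  proof
    assume "3 * j + 2 \<in> BSet I" then obtain k where "3 * j + 2 = 3 * k + 1" by (auto simp: BSet_def)
    then have "(3 * j + 2) mod 3 = (3 * k + 1) mod 3" by simp
    then show False by (simp only: m1 m2; simp)
  qed
  have notA1: "3 * j + 1 \<notin> ASet I" for j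
  proof
    assume "3 * j + 1 \<in> ASet I" then obtain k where "3 * j + 1 = 3 * k" by (auto simp: ASet_def)
    then have "(3 * j + 1) mod 3 = (3 * k) mod 3" by simp
    then show False by (simp only: m0 m1; simp)
  qed
  have notB0: "3 * j \<notin> BSet I" for j
  proof
    assume "3 * j \<in> BSet I" then obtain k where "3 * j = 3 * k + 1" by (auto simp: BSet_def)
    then have "(3 * j) mod 3 = (3 * k + 1) mod 3" by simp
    then show False by (simp only: m0 m1; simp)
  qed
  have inA: "i \<in> I \<Longrightarrow> 3 * i \<in> ASet I" for i by (simp add: ASet_def)
  have inB: "i \<in> I \<Longrightarrow> 3 * i + 1 \<in> BSet I" for i by (simp add: BSet_def)
  have g: "greedy_outcome n E (XI I) (fI lam I) xg"
    unfolding greedy_outcome_def action_profile_def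
  proof (intro conjI ballI)
    fix i assume "i \<in> {1..n}" then show "xg i \<in> XI I i" by (simp add: xg_def XI_def)
  next
    fix i y assume i: "i \<in> {1..n}" and y: "y \<in> XI I i"
    show "marg (fI lam I) {y} (acts xg (nbrs E i)) \<le> marg (fI lam I) {xg i} (acts xg (nbrs E i))"
    proof (cases "i \<in> I")
      case False
      then show ?thesis using y by (simp add: XI_def xg_def)
    next
      case True
      define B where "B = acts xg (nbrs E i)"
      have Bform: "\<forall>u\<in>B. \<exists>j. u = 3 * j + 2"
      proof
        fix u assume "u \<in> B"
        then obtain j where j: "j \<in> nbrs E i" "u = xg j" by (auto simp: B_def acts_def)
        have "(j, i) \<in> E" using j by (simp add: nbrs_def)
        then have "j \<notin> I" using ind True unfolding independent_set_def by blast
        then show "\<exists>j. u = 3 * j + 2" using j by (simp add: xg_def)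
      qed
      have BA: "B \<inter> ASet I = {}" using Bform notA2 by fastforce
      have n0: "3 * i \<notin> B"
      proof
        assume "3 * i \<in> B" then obtain k where "3 * i = 3 * k + 2" using Bform by blast
        then have "(3 * i) mod 3 = (3 * k + 2) mod 3" by simp
        then show False by (simp only: m0 m2; simp)
      qed
      have n1: "3 * i + 1 \<notin> B"
      proof
        assume "3 * i + 1 \<in> B" then obtain k where "3 * i + 1 = 3 * k + 2" using Bform by blast
        then have "(3 * i + 1) mod 3 = (3 * k + 2) mod 3" by simp
        then show False by (simp only: m1 m2; simp)
      qed
      have "y = 3 * i \<or> y = 3 * i + 1" using y True by (simp add: XI_def)
      then show ?thesis
        using True BA n0 n1 inA inB notA1
        by (auto simp: marg_fI[OF finI] xg_def B_def[symmetric])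
    qed
  qed
  have fg: "fI lam I (acts xg {1..n}) = real (card I) - (real (card I) - 1) * lam"
  proof -
    have e1: "acts xg {1..n} \<inter> ASet I = ASet I"
    proof
      show "acts xg {1..n} \<inter> ASet I \<subseteq> ASet I" by blast
      show "ASet I \<subseteq> acts xg {1..n} \<inter> ASet I"
        using IV by (auto simp: ASet_def acts_def xg_def)
    qed
    have e2: "acts xg {1..n} \<inter> BSet I = {}"
      using notB0 notB2 by (auto simp: acts_def xg_def)
    have cA: "card (ASet I) = card I" unfolding ASet_def by (rule card_image) (simp add: inj_on_def)
    show ?thesis unfolding fI_def e1 e2 cA using cI by (simp add: hh_def)
  qed
  have fb: "fI lam I (acts xb {1..n}) = real (card I)"
  proof -
    have e1: "acts xb {1..n} \<inter> BSet I = BSet I"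
    proof
      show "acts xb {1..n} \<inter> BSet I \<subseteq> BSet I" by blast
      show "BSet I \<subseteq> acts xb {1..n} \<inter> BSet I"
        using IV by (auto simp: BSet_def acts_def xb_def)
    qed
    have e2: "acts xb {1..n} \<inter> ASet I = {}"
      using notA1 notA2 by (auto simp: acts_def xb_def)
    have cB: "card (BSet I) = card I" unfolding BSet_def by (rule card_image) (simp add: inj_on_def)
    show ?thesis unfolding fI_def e1 e2 cB by (simp add: hh_def)
  qed
  have apb: "action_profile n (XI I) xb" by (simp add: action_profile_def xb_def XI_def)
  have optge: "opt_value n (XI I) (fI lam I) \<ge> real (card I)"
    using opt_ge[OF finS ds apb, of "fI lam I"] fb by simp
  have optpos: "opt_value n (XI I) (fI lam I) > 0" using optge cI by linarith
  have fnn0: "\<forall>B. B \<subseteq> S \<longrightarrow> fI lam I B \<ge> 0" using F unfolding in_F_lambda_def by (rule conjunct1)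
  have fnn: "\<And>B. B \<subseteq> S \<Longrightarrow> fI lam I B \<ge> 0" using fnn0 by blast
  define R where "R = {fI lam I (acts x {1..n}) / opt_value n (XI I) (fI lam I) | x. greedy_outcome n E (XI I) (fI lam I) x}"
  have bdd: "bdd_below R"
  proof (rule bdd_belowI)
    fix r assume "r \<in> R"
    then obtain x where x: "greedy_outcome n E (XI I) (fI lam I) x"
      and r: "r = fI lam I (acts x {1..n}) / opt_value n (XI I) (fI lam I)" by (auto simp: R_def)
    have "acts x {1..n} \<subseteq> S" using x unfolding greedy_outcome_def action_profile_def acts_def S_def by blast
    then show "0 \<le> r" using fnn optpos r by simp
  qed
  have "gamma n E (XI I) (fI lam I) \<le> fI lam I (acts xg {1..n}) / opt_value n (XI I) (fI lam I)"
    unfolding gamma_def R_def[symmetric]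
  proof (rule cInf_lower)
    show "fI lam I (acts xg {1..n}) / opt_value n (XI I) (fI lam I) \<in> R" unfolding R_def using g by blast
    show "bdd_below R" by (rule bdd)
  qed
  also have "\<dots> \<le> fI lam I (acts xg {1..n}) / real (card I)"
  proof (rule divide_left_mono)
    have "(real (card I) - 1) * lam \<le> (real (card I) - 1) * 1"
      using cI lam by (intro mult_left_mono) auto
    then show "0 \<le> fI lam I (acts xg {1..n})" unfolding fg by simp
    show "real (card I) \<le> opt_value n (XI I) (fI lam I)" by (rule optge)
    show "0 < opt_value n (XI I) (fI lam I) * real (card I)" using optpos cI by simp
  qed
  finally have "gamma n E (XI I) (fI lam I) \<le> (real (card I) - (real (card I) - 1) * lam) / real (card I)"
    unfolding fg .
  then show ?thesis using finS ds F optpos by blast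
qed

lemma singleton_partition: "partition_on V ((\<lambda>i. {i}) ` V)"
  unfolding partition_on_def
proof (intro conjI)
  show "\<Union> ((\<lambda>i. {i}) ` V) = V" by blast
  show "disjoint ((\<lambda>i. {i}) ` V)" unfolding disjoint_def by blast
  show "{} \<notin> (\<lambda>i. {i}) ` V" by blast
qed

theorem lemma4:
  fixes lam :: real and n :: nat and E :: "(nat \<times> nat) set"
  assumes "0 < lam" "lam < 1"
    and "n \<ge> 1"
    and "undirected_graph n E"
  shows "(real (independence_number n E) - (real (independence_number n E) - 1) * lam)
           / real (independence_number n E) \<ge> gamma_lambda lam n E
       \<and> gamma_lambda lam n E \<ge>
         (real (clique_cover_number n E) - (real (clique_cover_number n E) - 1) * lam)
           / (real (clique_cover_number n E) + lam)"
proof -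
  note lam = assms(1,2)
  note ug = assms(4)
  define al where "al = independence_number n E"
  define th where "th = clique_cover_number n E"
  define LB where "LB = (real th - (real th - 1) * lam) / (real th + lam)"
  define CI where "CI = {card I | I. I \<subseteq> {1..n} \<and> independent_set E I}"
  have finCI: "finite CI"
  proof -
    have "CI \<subseteq> card ` Pow {1..n}" by (auto simp: CI_def)
    then show ?thesis by (meson finite_Pow_iff finite_atLeastAtMost finite_imageI finite_subset)
  qed
  have "(1::nat, 1) \<notin> E" using ug by (auto simp: undirected_graph_def irrefl_def)
  then have "independent_set E {1}" by (simp add: independent_set_def)
  moreover have "{1::nat} \<subseteq> {1..n}" using assms(3) by simp
  ultimately have "card {1::nat} \<in> CI" unfolding CI_def by blast
  then have CIne: "CI \<noteq> {}" by blast
  have al1: "al \<ge> 1" unfolding al_def independence_number_def CI_def[symmetric]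
    using Max_ge[OF finCI \<open>card {1::nat} \<in> CI\<close>] by simp
  obtain I where I: "I \<subseteq> {1..n}" "independent_set E I" "card I = al"
    using Max_in[OF finCI CIne] unfolding al_def independence_number_def CI_def[symmetric]
    by (auto simp: CI_def)
  have Ine: "I \<noteq> {}" using I(3) al1 by auto
  have "\<exists>P. partition_on {1..n} P \<and> (\<forall>C\<in>P. clique E C) \<and> card P = card ((\<lambda>i. {i}) ` {1..n})"
    by (intro exI[of _ "(\<lambda>i. {i}) ` {1..n}"]) (auto simp: singleton_partition clique_def)
  then have "\<exists>k. \<exists>P. partition_on {1..n} P \<and> (\<forall>C\<in>P. clique E C) \<and> card P = k" by blast
  then have "\<exists>P. partition_on {1..n} P \<and> (\<forall>C\<in>P. clique E C) \<and> card P = th"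
    unfolding th_def clique_cover_number_def by (rule LeastI_ex)
  then obtain P where P: "partition_on {1..n} P" "\<forall>C\<in>P. clique E C" "card P = th" by blast
  define G where "G = {gamma n E X f | S X f.
      finite S \<and> decision_sets n S X \<and> in_F_lambda lam S f \<and> opt_value n X f > 0}"
  have lbG: "LB \<le> g" if "g \<in> G" for g
  proof -
    obtain S X f where inst: "g = gamma n E X f" "finite S" "decision_sets n S X"
      "in_F_lambda lam S f" "opt_value n X f > 0"
      using \<open>g \<in> G\<close> unfolding G_def by blast
    obtain x0 where "greedy_outcome n E X f x0" using greedy_exists[OF inst(2,3)] by blast
    then have ne: "{f (acts x {1..n}) / opt_value n X f | x. greedy_outcome n E X f x} \<noteq> {}" by blast
    show ?thesis unfolding inst(1) gamma_def
    proof (rule cInf_greatest[OF ne])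
      fix r assume "r \<in> {f (acts x {1..n}) / opt_value n X f | x. greedy_outcome n E X f x}"
      then obtain x where x: "greedy_outcome n E X f x" "r = f (acts x {1..n}) / opt_value n X f" by blast
      show "LB \<le> r" unfolding LB_def x(2) P(3)[symmetric]
        by (rule ratio_lb[OF lam inst(2-5) x(1) ug P(1,2)])
    qed
  qed
  have ub: "finite (\<Union>i\<in>{1..n}. XI I i) \<and> decision_sets n (\<Union>i\<in>{1..n}. XI I i) (XI I)
      \<and> in_F_lambda lam (\<Union>i\<in>{1..n}. XI I i) (fI lam I)
      \<and> opt_value n (XI I) (fI lam I) > 0
      \<and> gamma n E (XI I) (fI lam I) \<le> (real (card I) - (real (card I) - 1) * lam) / real (card I)"
    by (rule ub_instance[OF lam ug I(1,2) Ine])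
  have inG: "gamma n E (XI I) (fI lam I) \<in> G" unfolding G_def
    by (rule CollectI, rule exI[of _ "\<Union>i\<in>{1..n}. XI I i"], rule exI[of _ "XI I"], rule exI[of _ "fI lam I"]) (use ub in simp)
  have Gne: "G \<noteq> {}" using inG by blast
  have bddG: "bdd_below G" using lbG by (intro bdd_belowI) 
  have gl: "gamma_lambda lam n E = Inf G" unfolding gamma_lambda_def G_def by simp
  have "Inf G \<le> gamma n E (XI I) (fI lam I)" by (rule cInf_lower[OF inG bddG])
  also have "\<dots> \<le> (real al - (real al - 1) * lam) / real al" using ub I(3) by simp
  finally have "gamma_lambda lam n E \<le> (real al - (real al - 1) * lam) / real al" using gl by simp
  moreover have "LB \<le> gamma_lambda lam n E" unfolding gl by (rule cInf_greatest[OF Gne lbG])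
  ultimately show ?thesis unfolding al_def th_def LB_def by simp
qed

end
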